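(* Let $d\ge 1$ and $1\le q\le d$. Let $\mathbf{w}_1,\dots,\mathbf{w}_q$ be independent random vectors, each uniformly distributed on the unit sphere $S^{d-1}\subset\mathbb{R}^d$, and let $\{\mathbf{u}_1,\dots,\mathbf{u}_q\}$ be the orthonormal set obtained from them by Gram–Schmidt orthogonalization (this is well defined almost surely). Let $\mathbf{g}\in\mathbb{R}^d$ be a fixed nonzero vector. Define $\mathbf{v}:=\sum_{i=1}^q \operatorname{sign}(\mathbf{g}^\top\mathbf{u}_i)\,\mathbf{u}_i$, $\overline{\mathbf{v}}:=\mathbf{v}/\|\mathbf{v}\|$, $\overline{\mathbf{g}}:=\mathbf{g}/\|\mathbf{g}\|$, and $\hat{\mathbf{g}}:=(\mathbf{g}^\top\overline{\mathbf{v}})\,\overline{\mathbf{v}}$. Then $$\mathbb{E}[\hat{\mathbf{g}}]=\mathbb{E}\big[(\overline{\mathbf{g}}^\top\overline{\mathbf{v}})^2\big]\cdot\mathbf{g}.$$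
   Context: $\operatorname{sign}(a)=+1$ if $a>0$, $-1$ if $a<0$ (the event $\mathbf{g}^\top\mathbf{u}_i=0$ has probability zero). $\|\cdot\|$ is the Euclidean norm. *)

theory Defs
  imports "HOL-Probability.Probability"
begin

text \<open>Uniform distribution on the unit sphere of real^'n: the normalized surface
  measure, realised as the image of the uniform distribution on the open unit ball
  under radial projection x \<mapsto> x / norm x (cone measure = normalized surface measure).\<close>
definition sphere_unif :: "(real ^ 'n) measure" where
  "sphere_unif = distr (uniform_measure lborel (ball 0 1)) borel (\<lambda>x. sgn x)"

primrec gram_schmidt :: "(nat \<Rightarrow> 'a::real_inner) \<Rightarrow> nat \<Rightarrow> 'a list" where
  "gram_schmidt w 0 = []"
| "gram_schmidt w (Suc k) = gram_schmidt w k @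
     [sgn (w k - (\<Sum>u\<leftarrow>gram_schmidt w k. (w k \<bullet> u) *\<^sub>R u))]"

definition sign_vec :: "'a::real_inner \<Rightarrow> nat \<Rightarrow> (nat \<Rightarrow> 'a) \<Rightarrow> 'a" where
  "sign_vec g q w = (\<Sum>i<q. sgn (g \<bullet> (gram_schmidt w q ! i)) *\<^sub>R (gram_schmidt w q ! i))"

end

theory Submission imports Defs begin

lemma prod_Basis_cart: "(\<Prod>b\<in>(Basis::(real^'n) set). x \<bullet> b) = (\<Prod>i\<in>UNIV. x $ i)"
  by (simp add: Basis_vec_def cart_eq_inner_axis axis_eq_axis prod.UNION_disjoint)

typedef 'a wo = "UNIV :: 'a set" by auto

instance wo :: (finite) finite
proof
  have "UNIV = Abs_wo ` UNIV" by (metis Rep_wo_inverse surj_def)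
  then show "finite (UNIV :: 'a wo set)" by (metis finite finite_imageI)
qed

instantiation wo :: (finite) wellorder
begin
definition less_eq_wo :: "'a wo \<Rightarrow> 'a wo \<Rightarrow> bool" where
  "less_eq_wo x y = (to_nat (Rep_wo x) \<le> to_nat (Rep_wo y))"
definition less_wo :: "'a wo \<Rightarrow> 'a wo \<Rightarrow> bool" where
  "less_wo x y = (to_nat (Rep_wo x) < to_nat (Rep_wo y))"
instance
proof
  fix x y z :: "'a wo"
  show "(x < y) = (x \<le> y \<and> \<not> y \<le> x)" by (auto simp: less_eq_wo_def less_wo_def)
  show "x \<le> x" by (auto simp: less_eq_wo_def)
  show "x \<le> y \<Longrightarrow> y \<le> z \<Longrightarrow> x \<le> z" by (auto simp: less_eq_wo_def)
  show "x \<le> y \<Longrightarrow> y \<le> x \<Longrightarrow> x = y"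
    by (metis Rep_wo_inject less_eq_wo_def order_antisym to_nat_split)
  show "x \<le> y \<or> y \<le> x" by (auto simp: less_eq_wo_def)
next
  fix P :: "'a wo \<Rightarrow> bool" and a
  assume H: "\<And>x. (\<And>y. y < x \<Longrightarrow> P y) \<Longrightarrow> P x"
  have "\<And>n x. to_nat (Rep_wo x) = n \<Longrightarrow> P x"
  proof -
    fix n show "\<And>x. to_nat (Rep_wo x) = n \<Longrightarrow> P x"
      by (induction n rule: less_induct) (metis H less_wo_def)
  qed
  then show "P a" by blast
qed
end

definition Pw :: "real^'n \<Rightarrow> real^('n wo)" where "Pw x = (\<chi> i. x $ Rep_wo i)"
definition Qw :: "real^('n wo) \<Rightarrow> real^'n" where "Qw y = (\<chi> j. y $ Abs_wo j)"

lemma PQ[simp]: "Pw (Qw y) = y" "Qw (Pw x) = x"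
  by (simp_all add: Pw_def Qw_def Rep_wo_inverse Abs_wo_inverse vec_eq_iff)

lemma linear_Pw: "linear Pw" by (auto simp: linear_iff Pw_def vec_eq_iff)
lemma linear_Qw: "linear Qw" by (auto simp: linear_iff Qw_def vec_eq_iff)

lemma meas_Pw[measurable]: "Pw \<in> borel_measurable borel"
  by (intro borel_measurable_continuous_onI linear_continuous_on) (simp add: linear_conv_bounded_linear[symmetric] linear_Pw)
lemma meas_Qw[measurable]: "Qw \<in> borel_measurable borel"
  by (intro borel_measurable_continuous_onI linear_continuous_on) (simp add: linear_conv_bounded_linear[symmetric] linear_Qw)

lemma emeasure_box_cart: "(\<And>i. l $ i \<le> u $ i) \<Longrightarrow> emeasure lborel (box l (u::real^'n)) = (\<Prod>i\<in>UNIV. u $ i - l $ i)"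
proof -
  assume le: "\<And>i. l $ i \<le> u $ i"
  have "\<forall>b\<in>Basis. l \<bullet> b \<le> u \<bullet> b" using le by (auto simp: Basis_vec_def cart_eq_inner_axis[symmetric])
  then show ?thesis
    by (simp add: emeasure_lborel_box_eq prod_Basis_cart[of "u - l"])
qed

lemma distr_Qw: "distr lborel borel Qw = (lborel :: (real^'n) measure)"
proof (rule lborel_eqI[symmetric])
  fix l u :: "real^'n"
  assume le: "\<And>b. b \<in> Basis \<Longrightarrow> l \<bullet> b \<le> u \<bullet> b"
  have le': "l $ i \<le> u $ i" for i using le[of "axis i 1"] by (auto simp: Basis_vec_def cart_eq_inner_axis)
  have eq: "Qw -` box l u = box (Pw l) (Pw u)"
  proof -
    have all_wo: "(\<forall>j. P (Abs_wo j)) \<longleftrightarrow> (\<forall>i. P i)" for P :: "'n wo \<Rightarrow> bool"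
      by (metis Rep_wo_inverse)
    show ?thesis
      by (auto simp: mem_box_cart Qw_def Pw_def all_wo[symmetric, where P="\<lambda>i. l $ Rep_wo i < _ $ i \<and> _ $ i < u $ Rep_wo i"] Abs_wo_inverse)
  qed
  have "emeasure (distr lborel borel Qw) (box l u) = emeasure lborel (box (Pw l) (Pw u))"
    by (subst emeasure_distr) (auto simp: eq)
  also have "\<dots> = (\<Prod>i\<in>UNIV. Pw u $ i - Pw l $ i)"
    by (rule emeasure_box_cart) (simp add: Pw_def le')
  also have "\<dots> = (\<Prod>i\<in>UNIV. u $ i - l $ i)"
  proof -
    have bij: "bij_betw Rep_wo (UNIV :: 'n wo set) UNIV"
      by (rule bij_betwI[where g=Abs_wo]) (auto simp: Rep_wo_inverse Abs_wo_inverse)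
    show ?thesis unfolding Pw_def using prod.reindex_bij_betw[OF bij, of "\<lambda>i. u$i - l$i"] by simp
  qed
  also have "\<dots> = (\<Prod>b\<in>Basis. (u - l) \<bullet> b)" by (simp add: prod_Basis_cart)
  finally show "emeasure (distr lborel borel Qw) (box l u) = (\<Prod>b\<in>Basis. (u - l) \<bullet> b)" .
qed simp

lemma linear_meas: "linear (f :: 'a::euclidean_space \<Rightarrow> 'b::euclidean_space) \<Longrightarrow> f \<in> borel_measurable borel"
  by (intro borel_measurable_continuous_onI linear_continuous_on) (simp add: linear_conv_bounded_linear[symmetric])

lemma distr_orth_wo:
  fixes R :: "real^'m::{finite,wellorder} \<Rightarrow> real^'m::_"
  assumes R: "orthogonal_transformation R"
  shows "distr lborel borel R = lborel"
proof (rule lborel_eqI[symmetric])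
  have lin: "linear R" using R orthogonal_transformation_linear by blast
  note Rm[measurable] = linear_meas[OF lin]
  fix l u :: "(real,'m) vec"
  assume le: "\<And>b. b \<in> Basis \<Longrightarrow> l \<bullet> b \<le> u \<bullet> b"
  have bR: "bij R" using R orthogonal_transformation_bij by blast
  have eq: "R -` box l u = inv R ` box l u" using bR by (simp add: bij_vimage_eq_inv_image)
  have iR: "orthogonal_transformation (inv R)" using R orthogonal_transformation_inv by blast
  have bs: "R -` box l u \<in> sets borel" using measurable_sets[OF Rm, of "box l u"] by simp
  have "emeasure (distr lborel borel R) (box l u) = emeasure lborel (R -` box l u)"
    by (subst emeasure_distr) auto
  also have "\<dots> = emeasure lebesgue (R -` box l u)"
    using bs by (simp add: emeasure_completion)
  also have "\<dots> = ennreal (measure lebesgue (inv R ` box l u))"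
    unfolding eq by (rule emeasure_eq_measure2) (rule measurable_orthogonal_image[OF iR]; simp)
  also have "\<dots> = ennreal (measure lebesgue (box l u))"
    using measure_orthogonal_image[OF iR, of "box l u"] by simp
  also have "\<dots> = emeasure lebesgue (box l u)"
    by (rule emeasure_eq_measure2[symmetric]) simp
  also have "\<dots> = emeasure lborel (box l u)" by (simp add: emeasure_completion)
  also have "\<dots> = (\<Prod>b\<in>Basis. (u - l) \<bullet> b)"
    using le by (simp add: emeasure_lborel_box_eq inner_diff_left)
  finally show "emeasure (distr lborel borel R) (box l u) = (\<Prod>b\<in>Basis. (u - l) \<bullet> b)" .
qed simp

lemma inner_Pw: "Pw x \<bullet> Pw y = x \<bullet> y"
proof -
  have bij: "bij_betw Rep_wo (UNIV :: 'n wo set) UNIV"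
    by (rule bij_betwI[where g=Abs_wo]) (auto simp: Rep_wo_inverse Abs_wo_inverse)
  show ?thesis unfolding inner_vec_def Pw_def
    using sum.reindex_bij_betw[OF bij, of "\<lambda>i. x$i \<bullet> y$i"] by simp
qed

lemma distr_orth:
  fixes R :: "real^'n \<Rightarrow> real^'n"
  assumes R: "orthogonal_transformation R"
  shows "distr lborel borel R = lborel"
proof -
  have lin: "linear R" using R orthogonal_transformation_linear by blast
  note Rm[measurable] = linear_meas[OF lin]
  define R' where "R' = Pw \<circ> R \<circ> Qw"
  have lin': "linear R'" unfolding R'_def using lin linear_Pw linear_Qw by (intro linear_compose) auto
  have "R' x \<bullet> R' y = x \<bullet> y" for x y
  proof -
    have "R' x \<bullet> R' y = R (Qw x) \<bullet> R (Qw y)" by (simp add: R'_def inner_Pw)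
    also have "\<dots> = Qw x \<bullet> Qw y" using R by (simp add: orthogonal_transformation_def)
    also have "\<dots> = Pw (Qw x) \<bullet> Pw (Qw y)" by (rule inner_Pw[symmetric])
    finally show ?thesis by simp
  qed
  then have oR': "orthogonal_transformation R'" using lin' by (simp add: orthogonal_transformation_def)
  note R'm[measurable] = linear_meas[OF lin']
  have "distr lborel borel R = distr (distr lborel borel Qw) borel R" by (simp add: distr_Qw)
  also have "\<dots> = distr lborel borel (R \<circ> Qw)" by (subst distr_distr) auto
  also have "R \<circ> Qw = Qw \<circ> R'" by (auto simp: R'_def)
  also have "distr lborel borel (Qw \<circ> R') = distr (distr lborel borel R') borel Qw" by (subst distr_distr) auto
  also have "\<dots> = lborel" by (simp add: distr_orth_wo[OF oR'] distr_Qw)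
  finally show ?thesis .
qed

lemma orth_norm: "orthogonal_transformation R \<Longrightarrow> norm (R x) = norm x"
  by (simp add: orthogonal_transformation_norm)

lemma orth_meas: "orthogonal_transformation (R :: 'a::euclidean_space \<Rightarrow> 'a) \<Longrightarrow> R \<in> borel_measurable borel"
  by (rule linear_meas) (simp add: orthogonal_transformation_linear)

lemma sgn_orth: "orthogonal_transformation R \<Longrightarrow> sgn (R x) = R (sgn x)"
  by (simp add: sgn_div_norm orth_norm orthogonal_transformation_linear linear_cmul divide_inverse_commute scaleR_conv_of_real)

lemma distr_U:
  fixes R :: "real^'n \<Rightarrow> real^'n"
  assumes R: "orthogonal_transformation R"
  shows "distr (uniform_measure lborel (ball 0 1)) borel R = uniform_measure lborel (ball 0 1)"
    (is "distr ?U borel R = ?U")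
proof (rule measure_eqI)
  note Rm[measurable] = orth_meas[OF R]
  show "sets (distr ?U borel R) = sets ?U" by simp
  fix A assume "A \<in> sets (distr ?U borel R)"
  then have A[measurable]: "A \<in> sets borel" by simp
  have inv: "emeasure lborel (R -` X) = emeasure lborel X" if [measurable]: "X \<in> sets borel" for X
  proof -
    have "emeasure (distr lborel borel R) X = emeasure lborel X" by (simp add: distr_orth[OF R])
    then show ?thesis by (subst (asm) emeasure_distr) auto
  qed
  have Rm': "R \<in> measurable ?U borel" by (simp add: measurable_cong_sets[OF sets_uniform_measure refl])
  have "emeasure (distr ?U borel R) A = emeasure ?U (R -` A)"
    using Rm' by (subst emeasure_distr) auto
  also have "\<dots> = emeasure lborel (ball 0 1 \<inter> R -` A) / emeasure lborel (ball (0::real^'n) 1)"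
    using measurable_sets[OF Rm A] by (subst emeasure_uniform_measure) auto
  also have "ball 0 1 \<inter> R -` A = R -` (ball 0 1 \<inter> A)"
    using orth_norm[OF R] by auto
  also have "emeasure lborel (R -` (ball 0 1 \<inter> A)) = emeasure lborel (ball 0 1 \<inter> A)"
    by (rule inv) auto
  also have "emeasure lborel (ball 0 1 \<inter> A) / emeasure lborel (ball (0::real^'n) 1) = emeasure ?U A"
    by (rule emeasure_uniform_measure[symmetric]) auto
  finally show "emeasure (distr ?U borel R) A = emeasure ?U A" .
qed

lemma sets_sphere_unif[simp, measurable_cong]: "sets sphere_unif = sets borel"
  by (simp add: sphere_unif_def)

lemma space_sphere_unif[simp]: "space sphere_unif = UNIV"
  by (simp add: sphere_unif_def)

lemma sphere_inv:
  fixes R :: "real^'n \<Rightarrow> real^'n"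
  assumes R: "orthogonal_transformation R"
  shows "distr sphere_unif borel R = sphere_unif"
proof -
  note Rm[measurable] = orth_meas[OF R]
  let ?U = "uniform_measure lborel (ball (0::real^'n) 1)"
  have m1: "sgn \<in> measurable ?U borel" by (simp add: measurable_cong_sets[OF sets_uniform_measure refl])
  have m2: "R \<in> measurable ?U borel" by (simp add: measurable_cong_sets[OF sets_uniform_measure refl])
  have "distr sphere_unif borel R = distr ?U borel (R \<circ> sgn)"
    unfolding sphere_unif_def by (subst distr_distr) (auto intro: m1)
  also have "R \<circ> sgn = sgn \<circ> R" using sgn_orth[OF R] by auto
  also have "distr ?U borel (sgn \<circ> R) = distr (distr ?U borel R) borel sgn"
    by (subst distr_distr) (auto intro: m2)
  also have "\<dots> = sphere_unif" by (simp add: distr_U[OF R] sphere_unif_def)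
  finally show ?thesis .
qed

lemma prob_U: "prob_space (uniform_measure lborel (ball (0::real^'n) 1))"
proof (intro prob_space_uniform_measure)
  have "unit_ball_vol (real CARD('n)) \<noteq> 0" by (metis less_irrefl of_nat_0_le_iff unit_ball_vol_pos)
  then show "emeasure lborel (ball (0::real^'n) 1) \<noteq> 0" by (simp add: emeasure_ball)
  show "emeasure lborel (ball (0::real^'n) 1) \<noteq> \<infinity>" by (simp add: emeasure_ball)
qed

lemma prob_sphere: "prob_space (sphere_unif :: (real^'n) measure)"
  unfolding sphere_unif_def
  by (rule prob_space.prob_space_distr[OF prob_U]) (simp add: measurable_cong_sets[OF sets_uniform_measure refl])

lemma M_inv:
  fixes R :: "real^'n \<Rightarrow> real^'n"
  assumes R: "orthogonal_transformation R" and I: "finite I"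
  shows "distr (PiM I (\<lambda>_. sphere_unif)) (PiM I (\<lambda>_. sphere_unif)) (compose I R) = PiM I (\<lambda>_. sphere_unif)"
proof -
  note Rm[measurable] = orth_meas[OF R]
  have Rm': "R \<in> measurable sphere_unif sphere_unif"
    by (simp add: measurable_cong_sets[OF sets_sphere_unif sets_sphere_unif])
  have "distr (PiM I (\<lambda>_. sphere_unif)) (PiM I (\<lambda>_. sphere_unif)) (compose I R) =
        PiM I (\<lambda>_. distr sphere_unif sphere_unif R)"
    by (rule distr_PiM_finite_prob_space'[OF I prob_sphere prob_sphere Rm'])
  also have "distr sphere_unif sphere_unif R = distr sphere_unif borel R"
    by (rule distr_cong) auto
  also have "\<dots> = sphere_unif" by (rule sphere_inv[OF R])
  finally show ?thesis .
qed

lemma length_gs[simp]: "length (gram_schmidt w k) = k"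
  by (induction k) auto

lemma linear_sum_list: "linear R \<Longrightarrow> R (sum_list (map f xs)) = sum_list (map (\<lambda>x. R (f x)) xs)"
  by (induction xs) (auto simp: linear_add linear_0)

lemma gs_orth:
  assumes R: "orthogonal_transformation R"
  shows "(\<And>i. i < k \<Longrightarrow> w' i = R (w i)) \<Longrightarrow> gram_schmidt w' k = map R (gram_schmidt w k)"
proof (induction k)
  case 0 then show ?case by simp
next
  case (Suc k)
  have lin: "linear R" using R orthogonal_transformation_linear by blast
  have IH: "gram_schmidt w' k = map R (gram_schmidt w k)" using Suc by auto
  have wk: "w' k = R (w k)" using Suc by auto
  have ip: "R a \<bullet> R b = a \<bullet> b" for a b using R by (simp add: orthogonal_transformation_def)
  have "(\<Sum>u\<leftarrow>gram_schmidt w' k. (w' k \<bullet> u) *\<^sub>R u) = (\<Sum>u\<leftarrow>gram_schmidt w k. (w k \<bullet> u) *\<^sub>R R u)"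
    by (simp add: IH wk ip o_def)
  also have "\<dots> = R (\<Sum>u\<leftarrow>gram_schmidt w k. (w k \<bullet> u) *\<^sub>R u)"
    by (simp add: linear_sum_list[OF lin] linear_cmul[OF lin])
  finally have "w' k - (\<Sum>u\<leftarrow>gram_schmidt w' k. (w' k \<bullet> u) *\<^sub>R u) = R (w k - (\<Sum>u\<leftarrow>gram_schmidt w k. (w k \<bullet> u) *\<^sub>R u))"
    by (simp add: wk linear_diff[OF lin])
  then show ?case by (simp add: IH sgn_orth[OF R])
qed

definition Fv :: "real^'n \<Rightarrow> nat \<Rightarrow> (nat \<Rightarrow> real^'n) \<Rightarrow> real^'n" where
  "Fv g q w = (g \<bullet> sgn (sign_vec g q w)) *\<^sub>R sgn (sign_vec g q w)"

lemma sign_vec_orth: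
  assumes R: "orthogonal_transformation R" and Rg: "R g = g" and w: "\<And>i. i < q \<Longrightarrow> w' i = R (w i)"
  shows "sign_vec g q w' = R (sign_vec g q w)"
proof -
  have lin: "linear R" using R orthogonal_transformation_linear by blast
  have ip: "R a \<bullet> R b = a \<bullet> b" for a b using R by (simp add: orthogonal_transformation_def)
  have gs: "gram_schmidt w' q = map R (gram_schmidt w q)" by (rule gs_orth[OF R w])
  have "sign_vec g q w' = (\<Sum>i<q. sgn (R g \<bullet> R (gram_schmidt w q ! i)) *\<^sub>R R (gram_schmidt w q ! i))"
    unfolding sign_vec_def gs Rg by (intro sum.cong) auto
  also have "\<dots> = R (sign_vec g q w)"
    unfolding sign_vec_def by (simp add: ip linear_sum[OF lin] linear_cmul[OF lin])
  finally show ?thesis .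
qed

lemma Fv_orth:
  assumes R: "orthogonal_transformation R" and Rg: "R g = g" and w: "\<And>i. i < q \<Longrightarrow> w' i = R (w i)"
  shows "Fv g q w' = R (Fv g q w)"
proof -
  have lin: "linear R" using R orthogonal_transformation_linear by blast
  have ip: "R a \<bullet> R b = a \<bullet> b" for a b using R by (simp add: orthogonal_transformation_def)
  have gi: "g \<bullet> R x = g \<bullet> x" for x using ip[of g x] Rg by simp
  have sv: "sign_vec g q w' = R (sign_vec g q w)" by (rule sign_vec_orth[OF R Rg w])
  show ?thesis by (simp add: Fv_def sv sgn_orth[OF R] gi linear_cmul[OF lin])
qed

lemma gs_meas:
  fixes W :: "'b \<Rightarrow> nat \<Rightarrow> 'a::euclidean_space"
  shows "(\<And>j. j < k \<Longrightarrow> (\<lambda>x. W x j) \<in> borel_measurable N) \<Longrightarrow> i < k \<Longrightarrow>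
     (\<lambda>x. gram_schmidt (W x) k ! i) \<in> borel_measurable N"
proof (induction k arbitrary: i)
  case 0 then show ?case by simp
next
  case (Suc k)
  have IH: "(\<lambda>x. gram_schmidt (W x) k ! j) \<in> borel_measurable N" if "j < k" for j
    using Suc that by auto
  have Wk[measurable]: "(\<lambda>x. W x k) \<in> borel_measurable N" using Suc by auto
  show ?case
  proof (cases "i < k")
    case True
    then show ?thesis using IH[OF True] by (simp add: nth_append)
  next
    case False
    then have ik: "i = k" using Suc by auto
    have eq: "(\<lambda>x. gram_schmidt (W x) (Suc k) ! i) = (\<lambda>x. sgn (W x k - (\<Sum>j = 0..<k. (W x k \<bullet> gram_schmidt (W x) k ! j) *\<^sub>R gram_schmidt (W x) k ! j)))"
      by (simp add: ik nth_append sum_list_sum_nth)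
    have [measurable]: "(\<lambda>x. gram_schmidt (W x) k ! j) \<in> borel_measurable N" if "j \<in> {0..<k}" for j
      using IH that by auto
    show ?thesis unfolding eq by measurable
  qed
qed

lemma Fv_meas:
  fixes g :: "real^'n"
  shows "Fv g q \<in> borel_measurable (PiM {..<q} (\<lambda>_. sphere_unif :: (real^'n) measure))"
proof -
  let ?M = "PiM {..<q} (\<lambda>_. sphere_unif :: (real^'n) measure)"
  have cm: "(\<lambda>w. w j) \<in> borel_measurable ?M" if "j < q" for j
  proof -
    have "(\<lambda>w. w j) \<in> measurable ?M sphere_unif"
      by (rule measurable_component_singleton) (use that in auto)
    then show ?thesis by (simp add: measurable_cong_sets[OF refl sets_sphere_unif])
  qed
  have gm: "(\<lambda>w. gram_schmidt w q ! i) \<in> borel_measurable ?M" if "i < q" for i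
    by (rule gs_meas[where W="\<lambda>w. w"]) (use that cm in auto)
  have sv: "(\<lambda>w. sign_vec g q w) \<in> borel_measurable ?M"
    unfolding sign_vec_def
  proof (rule borel_measurable_sum, rule borel_measurable_scaleR)
    fix i assume "i \<in> {..<q}"
    then have i: "i < q" by simp
    have "(\<lambda>w. g \<bullet> gram_schmidt w q ! i) \<in> borel_measurable ?M"
      by (rule borel_measurable_inner[OF borel_measurable_const gm[OF i]])
    from measurable_compose[OF this borel_measurable_sgn]
    show "(\<lambda>w. sgn (g \<bullet> gram_schmidt w q ! i)) \<in> borel_measurable ?M" by (simp add: o_def)
    show "(\<lambda>w. gram_schmidt w q ! i) \<in> borel_measurable ?M" by (rule gm[OF i])
  qed
  have ss: "(\<lambda>w. sgn (sign_vec g q w)) \<in> borel_measurable ?M"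
    using measurable_compose[OF sv borel_measurable_sgn] by (simp add: o_def)
  show ?thesis unfolding Fv_def
    by (intro borel_measurable_scaleR borel_measurable_inner borel_measurable_const ss)
qed

lemma refl_orth:
  fixes e :: "real^'n"
  assumes "e \<noteq> 0"
  shows "orthogonal_transformation (\<lambda>x. x - (2 * (x \<bullet> e) / (e \<bullet> e)) *\<^sub>R e)"
  unfolding orthogonal_transformation_def
proof (intro conjI allI)
  show "linear (\<lambda>x. x - (2 * (x \<bullet> e) / (e \<bullet> e)) *\<^sub>R e)"
    by (auto simp: linear_iff inner_add_left algebra_simps add_divide_distrib diff_divide_distrib)
  fix v w
  have ee: "e \<bullet> e \<noteq> 0" using assms by simp
  show "(v - (2 * (v \<bullet> e) / (e \<bullet> e)) *\<^sub>R e) \<bullet> (w - (2 * (w \<bullet> e) / (e \<bullet> e)) *\<^sub>R e) = v \<bullet> w"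
  proof -
    define a where "a = v \<bullet> e"
    define b where "b = w \<bullet> e"
    define k where "k = e \<bullet> e"
    have k: "k \<noteq> 0" using ee k_def by simp
    have ew: "e \<bullet> w = b" "e \<bullet> v = a" by (simp_all add: a_def b_def inner_commute)
    have "(v - (2 * a / k) *\<^sub>R e) \<bullet> (w - (2 * b / k) *\<^sub>R e) = v \<bullet> w - (2*b/k) * a - (2*a/k) * b + (2*a/k)*(2*b/k)*k"
      by (simp add: inner_diff_left inner_diff_right ew a_def[symmetric] k_def[symmetric] algebra_simps)
    also have "\<dots> = v \<bullet> w" using k by (simp add: field_simps)
    finally show ?thesis by (simp add: a_def b_def k_def)
  qed
qed

theorem theorem1:
  fixes g :: "real ^ 'n" and q :: nat
  assumes "1 \<le> q" and "q \<le> CARD('n)" and "g \<noteq> 0"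
  defines "M \<equiv> PiM {..<q} (\<lambda>_. sphere_unif :: (real ^ 'n) measure)"
  shows "integral\<^sup>L M (\<lambda>w. (g \<bullet> sgn (sign_vec g q w)) *\<^sub>R sgn (sign_vec g q w))
       = (integral\<^sup>L M (\<lambda>w. (sgn g \<bullet> sgn (sign_vec g q w))\<^sup>2)) *\<^sub>R g"
proof -
  have F: "(\<lambda>w. (g \<bullet> sgn (sign_vec g q w)) *\<^sub>R sgn (sign_vec g q w)) = Fv g q"
    by (simp add: Fv_def fun_eq_iff)
  interpret P: prob_space M unfolding M_def by (rule prob_space_PiM) (rule prob_sphere)
  have Fm: "Fv g q \<in> borel_measurable M" unfolding M_def by (rule Fv_meas)
  have bnd: "norm (Fv g q w) \<le> norm g" for w
  proof -
    have "norm (Fv g q w) = \<bar>g \<bullet> sgn (sign_vec g q w)\<bar> * norm (sgn (sign_vec g q w))"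
      by (simp add: Fv_def)
    also have "\<dots> \<le> norm g * norm (sgn (sign_vec g q w)) * norm (sgn (sign_vec g q w))"
      by (intro mult_right_mono Cauchy_Schwarz_ineq2) auto
    also have "\<dots> \<le> norm g"
      by (cases "sign_vec g q w = 0") (auto simp: norm_sgn)
    finally show ?thesis .
  qed
  have int: "integrable M (Fv g q)"
    by (rule P.integrable_const_bound[where B="norm g"]) (use bnd Fm in auto)
  define E where "E = integral\<^sup>L M (Fv g q)"
  define c where "c = (E \<bullet> g) / (g \<bullet> g)"
  define e where "e = E - c *\<^sub>R g"
  have gg: "g \<bullet> g \<noteq> 0" using assms by simp
  have ge: "g \<bullet> e = 0" unfolding e_def c_def using gg by (simp add: inner_diff_right inner_commute)
  have e0: "e = 0"
  proof (rule ccontr)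
    assume en: "e \<noteq> 0"
    define R where "R = (\<lambda>x. x - (2 * (x \<bullet> e) / (e \<bullet> e)) *\<^sub>R e)"
    have oR: "orthogonal_transformation R" unfolding R_def by (rule refl_orth[OF en])
    have Rg: "R g = g" unfolding R_def using ge by (simp add: inner_commute)
    let ?T = "compose {..<q} R"
    have dT: "distr M M ?T = M" unfolding M_def by (rule M_inv[OF oR]) simp
    have Tm: "?T \<in> measurable M M"
    proof -
      note Rm[measurable] = orth_meas[OF oR]
      show ?thesis unfolding M_def compose_def
        by (rule measurable_restrict) (auto simp: measurable_cong_sets[OF refl sets_sphere_unif])
    qed
    have "E = integral\<^sup>L (distr M M ?T) (Fv g q)" unfolding E_def by (simp only: dT)
    also have "\<dots> = integral\<^sup>L M (\<lambda>w. Fv g q (?T w))"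
      by (rule integral_distr[OF Tm Fm])
    also have "\<dots> = integral\<^sup>L M (\<lambda>w. R (Fv g q w))"
      by (intro Bochner_Integration.integral_cong refl Fv_orth[OF oR Rg]) (simp add: compose_def)
    also have "\<dots> = R E" unfolding E_def
      by (rule integral_bounded_linear[OF _ int])
        (simp add: linear_conv_bounded_linear[symmetric] oR orthogonal_transformation_linear)
    finally have "E = R E" .
    then have "(2 * (E \<bullet> e) / (e \<bullet> e)) *\<^sub>R e = E - R E" by (simp add: R_def)
    then have "(2 * (E \<bullet> e) / (e \<bullet> e)) *\<^sub>R e = 0" using \<open>E = R E\<close> by simp
    then have "E \<bullet> e = 0" using en by simp
    moreover have "E \<bullet> e = e \<bullet> e"
    proof -
      have "E = e + c *\<^sub>R g" by (simp add: e_def)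
      then have "E \<bullet> e = e \<bullet> e + c * (g \<bullet> e)" by (simp add: inner_add_left)
      then show ?thesis using ge by simp
    qed
    ultimately show False using en by simp
  qed
  then have Ec: "E = c *\<^sub>R g" unfolding e_def by simp
  have "E \<bullet> g = integral\<^sup>L M (\<lambda>w. Fv g q w \<bullet> g)" unfolding E_def using int by simp
  also have "\<dots> = integral\<^sup>L M (\<lambda>w. (g \<bullet> sgn (sign_vec g q w))\<^sup>2)"
    by (simp add: Fv_def power2_eq_square inner_commute)
  finally have Eg: "E \<bullet> g = integral\<^sup>L M (\<lambda>w. (g \<bullet> sgn (sign_vec g q w))\<^sup>2)" .
  have sq: "(sgn g \<bullet> x)\<^sup>2 = (g \<bullet> x)\<^sup>2 / (g \<bullet> g)" for x
    using gg by (simp add: sgn_div_norm dot_square_norm power_mult_distrib power_inverse divide_inverse mult.commute)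
  have "integral\<^sup>L M (\<lambda>w. (sgn g \<bullet> sgn (sign_vec g q w))\<^sup>2) = c"
    unfolding sq c_def Eg by simp
  then show ?thesis unfolding F using Ec E_def by simp
qed

end
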